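(* There is no deterministic translation-equivariant proper $2$-coloring of the $1$-dimensional Poisson–Voronoi map. That is, if $\mathcal{P}$ is a unit intensity Poisson process on $\mathbb{R}$, there is no measurable $F:\mathbb{M}\to\mathbb{M}^2$ such that $F(\mathcal{P})$ is a.s. a partition of $\mathcal{P}$ into two parts with no two consecutive points of $\mathcal{P}$ in the same part, and such that $F(\mathcal{P}+t)=F(\mathcal{P})+t$ for all $t\in\mathbb{R}$.
   Context: $\mathbb{M}$ is the space of locally finite subsets of $\mathbb{R}$ with the local topology and Borel $\sigma$-algebra. In the $1$-dimensional Voronoi map, the cells are intervals around the points and two cells are adjacent iff their centers are consecutive points of $\mathcal{P}$. *)

theory Defs
  imports "HOL-Probability.Probability"
begin

definition locally_finite_set :: "real set \<Rightarrow> bool" where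
  "locally_finite_set A \<longleftrightarrow> (\<forall>K. bounded K \<longrightarrow> finite (A \<inter> K))"

text \<open>The measurable space \<open>\<M>\<close> of locally finite subsets of the reals, with the
  sigma-algebra generated by the counting maps \<open>A \<mapsto> #(A \<inter> B)\<close>, B bounded Borel
  (this is the Borel sigma-algebra of the local topology).\<close>
definition lf_space :: "real set measure" where
  "lf_space = sigma (Collect locally_finite_set)
     {{A \<in> Collect locally_finite_set. card (A \<inter> B) = k} | B k.
        B \<in> sets borel \<and> bounded B}"

definition translate :: "real \<Rightarrow> real set \<Rightarrow> real set" where
  "translate t A = (\<lambda>x. x + t) ` A"

text \<open>Unit intensity Poisson process on the reals, given as its law on \<open>\<M>\<close>:
  for pairwise disjoint bounded Borel sets the counts are independent and
  Poisson distributed with mean the Lebesgue measure.\<close>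
definition poisson_process :: "real set measure \<Rightarrow> bool" where
  "poisson_process P \<longleftrightarrow> prob_space P \<and> sets P = sets lf_space \<and>
     (\<forall>(n::nat) (Bs :: nat \<Rightarrow> real set) (ks :: nat \<Rightarrow> nat).
        (\<forall>i<n. Bs i \<in> sets borel \<and> bounded (Bs i)) \<and> disjoint_family_on Bs {..<n} \<longrightarrow>
        measure P {A \<in> space lf_space. \<forall>i<n. card (A \<inter> Bs i) = ks i}
          = (\<Prod>i<n. exp (- measure lborel (Bs i)) * measure lborel (Bs i) ^ ks i / fact (ks i)))"

definition consecutive :: "real set \<Rightarrow> real \<Rightarrow> real \<Rightarrow> bool" where
  "consecutive A x y \<longleftrightarrow> x \<in> A \<and> y \<in> A \<and> x < y \<and> (\<forall>z\<in>A. \<not> (x < z \<and> z < y))"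

definition proper_2colouring :: "real set \<Rightarrow> real set \<times> real set \<Rightarrow> bool" where
  "proper_2colouring A C \<longleftrightarrow> fst C \<union> snd C = A \<and> fst C \<inter> snd C = {} \<and>
     (\<forall>x y. consecutive A x y \<longrightarrow>
        \<not> (x \<in> fst C \<and> y \<in> fst C) \<and> \<not> (x \<in> snd C \<and> y \<in> snd C))"

end

theory Submission
  imports Defs "HOL-Probability.Product_PMF"
begin


abbreviation "\<Omega> \<equiv> Collect locally_finite_set"

definition Gen :: "real set set set" where
 "Gen = {{A \<in> Collect locally_finite_set. card (A \<inter> B) = k} | B k.
        B \<in> sets borel \<and> bounded B}"

lemma Gen_Pow: "Gen \<subseteq> Pow \<Omega>" unfolding Gen_def by auto

lemma lf_eq: "lf_space = sigma \<Omega> Gen" unfolding lf_space_def Gen_def by simp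

lemma space_lf[simp]: "space lf_space = \<Omega>"
  unfolding lf_eq using Gen_Pow by (simp add: space_measure_of_conv)

lemma sets_lf: "sets lf_space = sigma_sets \<Omega> Gen"
  unfolding lf_eq using Gen_Pow by simp

lemma lf_finite: "locally_finite_set A \<Longrightarrow> bounded B \<Longrightarrow> finite (A \<inter> B)"
  unfolding locally_finite_set_def by auto

lemma gen_sets: "B \<in> sets borel \<Longrightarrow> bounded B \<Longrightarrow> {A \<in> \<Omega>. card (A \<inter> B) = k} \<in> sets lf_space"
  unfolding sets_lf Gen_def by (rule sigma_sets.Basic) auto

lemma cnt_meas[measurable (raw)]:
  assumes "B \<in> sets borel" "bounded B"
  shows "(\<lambda>A. card (A \<inter> B)) \<in> lf_space \<rightarrow>\<^sub>M count_space UNIV"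
proof (subst measurable_count_space_eq_countable, safe)
  fix a :: nat
  have "(\<lambda>A. card (A \<inter> B)) -` {a} \<inter> space lf_space = {A \<in> \<Omega>. card (A \<inter> B) = a}" by auto
  then show "(\<lambda>A. card (A \<inter> B)) -` {a} \<inter> space lf_space \<in> sets lf_space" using gen_sets[OF assms] by simp
qed auto

lemma Omega_sets[simp]: "\<Omega> \<in> sets lf_space" by (metis sets.top space_lf)

definition vecs :: "real set list \<Rightarrow> real set \<Rightarrow> nat list" where
  "vecs Bs A = map (\<lambda>B. card (A \<inter> B)) Bs"

definition bb :: "real set list \<Rightarrow> bool" where
  "bb Bs \<longleftrightarrow> (\<forall>B\<in>set Bs. B \<in> sets borel \<and> bounded B)"

lemma vecs_pre_sets: "bb Bs \<Longrightarrow> {A \<in> \<Omega>. vecs Bs A = a} \<in> sets lf_space"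
proof (induction Bs arbitrary: a)
  case Nil
  then show ?case by (cases a) (auto simp: vecs_def)
next
  case (Cons B Bs)
  show ?case
  proof (cases a)
    case Nil
    then show ?thesis by (simp add: vecs_def)
  next
    case (Cons x xs)
    have "{A \<in> \<Omega>. vecs (B#Bs) A = a} = {A \<in> \<Omega>. card (A \<inter> B) = x} \<inter> {A \<in> \<Omega>. vecs Bs A = xs}"
      using Cons by (auto simp: vecs_def)
    moreover have "{A \<in> \<Omega>. card (A \<inter> B) = x} \<in> sets lf_space"
      using Cons.prems by (intro gen_sets) (auto simp: bb_def)
    moreover have "{A \<in> \<Omega>. vecs Bs A = xs} \<in> sets lf_space"
      using Cons.prems by (intro Cons.IH) (auto simp: bb_def)
    ultimately show ?thesis by auto
  qed
qed

lemma vecs_meas: "bb Bs \<Longrightarrow> vecs Bs \<in> lf_space \<rightarrow>\<^sub>M count_space UNIV"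
proof (subst measurable_count_space_eq_countable, safe)
  fix a assume "bb Bs"
  have "vecs Bs -` {a} \<inter> space lf_space = {A \<in> \<Omega>. vecs Bs A = a}" by auto
  then show "vecs Bs -` {a} \<inter> space lf_space \<in> sets lf_space" using vecs_pre_sets[OF \<open>bb Bs\<close>] by simp
qed auto

lemma vecs_sets: "bb Bs \<Longrightarrow> {A \<in> \<Omega>. vecs Bs A \<in> K} \<in> sets lf_space"
proof -
  assume "bb Bs"
  from measurable_sets[OF vecs_meas[OF this], of K] show ?thesis
    by (simp add: vimage_def Int_def conj_commute)
qed

definition Galg :: "real set set set" where
  "Galg = {{A \<in> \<Omega>. vecs Bs A \<in> K} | Bs K. bb Bs}"

lemma Galg_sets: "Galg \<subseteq> sets lf_space"
  unfolding Galg_def using vecs_sets by auto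

lemma Galg_I: "bb Bs \<Longrightarrow> {A \<in> \<Omega>. vecs Bs A \<in> K} \<in> Galg"
  unfolding Galg_def by blast

lemma Gen_Galg: "Gen \<subseteq> Galg"
proof
  fix X assume "X \<in> Gen"
  then obtain B k where X: "X = {A \<in> \<Omega>. card (A \<inter> B) = k}" "B \<in> sets borel" "bounded B"
    unfolding Gen_def by auto
  then have "X = {A \<in> \<Omega>. vecs [B] A \<in> {[k]}}" by (auto simp: vecs_def)
  then show "X \<in> Galg" using X Galg_I[of "[B]" "{[k]}"] by (auto simp: bb_def)
qed

lemma sets_lf_Galg: "sets lf_space = sigma_sets \<Omega> Galg"
proof
  show "sets lf_space \<subseteq> sigma_sets \<Omega> Galg"
    unfolding sets_lf using Gen_Galg by (meson sigma_sets_mono subset_iff sigma_sets.Basic)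
  show "sigma_sets \<Omega> Galg \<subseteq> sets lf_space"
    using Galg_sets by (metis sets.sigma_sets_subset space_lf)
qed

lemma Galg_append:
  assumes "bb Bs" "bb Cs"
  shows "{A \<in> \<Omega>. vecs Bs A \<in> K} \<inter> {A \<in> \<Omega>. vecs Cs A \<in> L}
    = {A \<in> \<Omega>. vecs (Bs @ Cs) A \<in> {v. take (length Bs) v \<in> K \<and> drop (length Bs) v \<in> L}}"
  by (auto simp: vecs_def)

lemma bb_append[simp]: "bb (Bs @ Cs) \<longleftrightarrow> bb Bs \<and> bb Cs" by (auto simp: bb_def)

lemma Galg_Int_stable: "Int_stable Galg"
proof (unfold Int_stable_def, safe)
  fix X Y assume "X \<in> Galg" "Y \<in> Galg"
  then obtain Bs K Cs L where "X = {A \<in> \<Omega>. vecs Bs A \<in> K}" "Y = {A \<in> \<Omega>. vecs Cs A \<in> L}" "bb Bs" "bb Cs"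
    unfolding Galg_def by blast
  then have "X \<inter> Y = {A \<in> \<Omega>. vecs (Bs @ Cs) A \<in> {v. take (length Bs) v \<in> K \<and> drop (length Bs) v \<in> L}}"
    using Galg_append[of Bs Cs K L] by simp
  moreover have "{A \<in> \<Omega>. vecs (Bs @ Cs) A \<in> {v. take (length Bs) v \<in> K \<and> drop (length Bs) v \<in> L}} \<in> Galg"
    by (rule Galg_I) (use \<open>bb Bs\<close> \<open>bb Cs\<close> in simp)
  ultimately show "X \<inter> Y \<in> Galg" by simp
qed




fun disj :: "real set list \<Rightarrow> bool" where
  "disj [] = True"
| "disj (D # L) \<longleftrightarrow> D \<inter> \<Union>(set L) = {} \<and> disj L"

fun atoms :: "real set list \<Rightarrow> real set list" where
  "atoms [] = []"
| "atoms (B # Bs) = (B - \<Union>(set Bs)) # concat (map (\<lambda>D. [D \<inter> B, D - B]) (atoms Bs))"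

fun pairsum :: "nat list \<Rightarrow> nat list" where
  "pairsum (a # b # r) = (a + b) # pairsum r"
| "pairsum _ = []"

fun sumfst :: "nat list \<Rightarrow> nat" where
  "sumfst (a # b # r) = a + sumfst r"
| "sumfst _ = 0"

fun phi :: "nat \<Rightarrow> nat list \<Rightarrow> nat list" where
  "phi 0 c = []"
| "phi (Suc n) c = (hd c + sumfst (tl c)) # phi n (pairsum (tl c))"

lemma pairsum_concat: "pairsum (concat (map (\<lambda>D. [f D, g D]) L)) = map (\<lambda>D. f D + g D) L"
  by (induction L) auto

lemma sumfst_concat: "sumfst (concat (map (\<lambda>D. [f D, g D]) L)) = sum_list (map f L)"
  by (induction L) auto

lemma Union_concat: "\<Union>(set (concat (map (\<lambda>D. [D \<inter> B, D - B]) L))) = \<Union>(set L)"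
  by (induction L) auto

lemma Union_atoms: "\<Union>(set (atoms Bs)) = \<Union>(set Bs)"
proof (induction Bs)
  case (Cons B Bs)
  have "\<Union>(set (atoms (B#Bs))) = (B - \<Union>(set Bs)) \<union> \<Union>(set (atoms Bs))"
    by (simp only: atoms.simps list.set Union_insert Union_concat)
  with Cons show ?case by auto
qed simp

lemma disj_concat: "disj L \<Longrightarrow> disj (concat (map (\<lambda>D. [D \<inter> B, D - B]) L))"
proof (induction L)
  case (Cons D L)
  have "\<Union>(set (concat (map (\<lambda>D. [D \<inter> B, D - B]) L))) \<subseteq> \<Union>(set L)" by auto
  with Cons show ?case by auto
qed simp

lemma disj_atoms: "disj (atoms Bs)"
proof (induction Bs)
  case (Cons B Bs)
  have "\<Union>(set (concat (map (\<lambda>D. [D \<inter> B, D - B]) (atoms Bs)))) \<subseteq> \<Union>(set (atoms Bs))" by auto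
  with Cons show ?case using Union_atoms[of Bs] by (auto intro: disj_concat)
qed simp

lemma atoms_sub: "D \<in> set (atoms Bs) \<Longrightarrow> \<exists>B\<in>set Bs. D \<subseteq> B"
proof (induction Bs arbitrary: D)
  case (Cons B Bs)
  then show ?case by fastforce
qed simp

lemma atoms_borel: "(\<forall>B\<in>set Bs. B \<in> sets borel) \<Longrightarrow> D \<in> set (atoms Bs) \<Longrightarrow> D \<in> sets borel"
proof (induction Bs arbitrary: D)
  case (Cons B Bs)
  have "\<Union>(set Bs) \<in> sets borel" using Cons.prems by (intro sets.finite_Union) auto
  with Cons show ?case by auto
qed simp

lemma bb_atoms: "bb Bs \<Longrightarrow> bb (atoms Bs)"
  unfolding bb_def using atoms_borel atoms_sub bounded_subset by metis

lemma card_disj: "disj L \<Longrightarrow> finite Y \<Longrightarrow> card (Y \<inter> \<Union>(set L)) = sum_list (map (\<lambda>D. card (Y \<inter> D)) L)"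
proof (induction L)
  case (Cons D L)
  have "Y \<inter> \<Union>(set (D # L)) = (Y \<inter> D) \<union> (Y \<inter> \<Union>(set L))" by auto
  moreover have "(Y \<inter> D) \<inter> (Y \<inter> \<Union>(set L)) = {}" using Cons.prems by auto
  ultimately have "card (Y \<inter> \<Union>(set (D # L))) = card (Y \<inter> D) + card (Y \<inter> \<Union>(set L))"
    using Cons.prems by (simp add: card_Un_disjoint)
  with Cons show ?case by simp
qed simp

lemma bounded_Union_list: "bb Bs \<Longrightarrow> bounded (\<Union>(set Bs))"
  unfolding bb_def by (intro bounded_Union) auto

lemma vecs_phi:
  assumes "locally_finite_set A" "bb Bs"
  shows "vecs Bs A = phi (length Bs) (vecs (atoms Bs) A)"
  using assms(2)
proof (induction Bs)
  case Nil
  then show ?case by (simp add: vecs_def)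
next
  case (Cons B Bs)
  have bB: "bounded B" "bb Bs" using Cons.prems by (auto simp: bb_def)
  have fin: "finite (A \<inter> X)" if "X \<subseteq> B" for X
    using lf_finite[OF assms(1)] bB bounded_subset that by blast
  have finD: "finite (A \<inter> D)" if "D \<in> set (atoms Bs)" for D
    using lf_finite[OF assms(1)] bb_atoms[OF bB(2)] that by (auto simp: bb_def)
  have cD: "card (A \<inter> (D \<inter> B)) + card (A \<inter> (D - B)) = card (A \<inter> D)" if "D \<in> set (atoms Bs)" for D
  proof -
    have "A \<inter> D = (A \<inter> (D \<inter> B)) \<union> (A \<inter> (D - B))" by auto
    then show ?thesis using finD[OF that] by (metis (no_types, lifting) Diff_disjoint Int_Diff card_Un_disjoint finite_Un inf_assoc)
  qed
  have s1: "pairsum (tl (vecs (atoms (B # Bs)) A)) = vecs (atoms Bs) A"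
    unfolding vecs_def using cD by (simp add: map_concat pairsum_concat[of "\<lambda>D. card (A \<inter> (D \<inter> B))" "\<lambda>D. card (A \<inter> (D - B))", unfolded comp_def] o_def cong: map_cong)
  have s2: "sumfst (tl (vecs (atoms (B # Bs)) A)) = card (A \<inter> B \<inter> \<Union>(set Bs))"
  proof -
    have "sumfst (tl (vecs (atoms (B # Bs)) A)) = sum_list (map (\<lambda>D. card (A \<inter> (D \<inter> B))) (atoms Bs))"
      unfolding vecs_def by (simp add: map_concat sumfst_concat[of "\<lambda>D. card (A \<inter> (D \<inter> B))" "\<lambda>D. card (A \<inter> (D - B))", unfolded comp_def] o_def)
    also have "\<dots> = sum_list (map (\<lambda>D. card ((A \<inter> B) \<inter> D)) (atoms Bs))"
      by (simp add: Int_ac)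
    also have "\<dots> = card ((A \<inter> B) \<inter> \<Union>(set (atoms Bs)))"
      using card_disj[OF disj_atoms, of "A \<inter> B" Bs] fin[of B] by simp
    finally show ?thesis by (simp add: Union_atoms)
  qed
  have s3: "hd (vecs (atoms (B # Bs)) A) = card (A \<inter> (B - \<Union>(set Bs)))" by (simp add: vecs_def)
  have "card (A \<inter> B) = card (A \<inter> (B - \<Union>(set Bs))) + card (A \<inter> B \<inter> \<Union>(set Bs))"
  proof -
    have "A \<inter> B = (A \<inter> (B - \<Union>(set Bs))) \<union> (A \<inter> B \<inter> \<Union>(set Bs))" by auto
    moreover have "finite (A \<inter> (B - \<Union>(set Bs)))" "finite (A \<inter> B \<inter> \<Union>(set Bs))"
      using fin[of "B - \<Union>(set Bs)"] fin[of "B \<inter> \<Union>(set Bs)"] by (auto simp: Int_assoc)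
    ultimately show ?thesis by (metis (no_types, lifting) card_Un_disjoint Diff_disjoint Int_Diff inf_assoc inf_commute)
  qed
  then show ?case using Cons.IH[OF bB(2)] s1 s2 s3 by (simp add: vecs_def)
qed

lemma atoms_image: "inj f \<Longrightarrow> atoms (map (image f) Bs) = map (image f) (atoms Bs)"
proof (induction Bs)
  case (Cons B Bs)
  have "f ` B - \<Union>(set (map ((`) f) Bs)) = f ` (B - \<Union>(set Bs))"
    using Cons.prems by (simp add: image_set_diff image_Union)
  moreover have "concat (map (\<lambda>D. [D \<inter> f ` B, D - f ` B]) (map ((`) f) L))
     = map ((`) f) (concat (map (\<lambda>D. [D \<inter> B, D - B]) L))" for L
    using Cons.prems by (induction L) (auto simp: image_Int image_set_diff)
  ultimately show ?case using Cons by simp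
qed simp

lemma disj_nth: "disj L \<Longrightarrow> i < j \<Longrightarrow> j < length L \<Longrightarrow> L ! i \<inter> L ! j = {}"
proof (induction L arbitrary: i j)
  case (Cons D L)
  show ?case
  proof (cases i)
    case 0
    then obtain j' where j': "j = Suc j'" "j' < length L" using Cons.prems by (cases j) auto
    have "L ! j' \<in> set L" using j' by simp
    moreover have "D \<inter> \<Union>(set L) = {}" using Cons.prems by simp
    ultimately have "D \<inter> L ! j' = {}" by blast
    then show ?thesis using 0 j' by simp
  next
    case (Suc i')
    then obtain j' where j': "j = Suc j'" using Cons.prems by (cases j) auto
    then show ?thesis using Cons Suc by simp
  qed
qed simp




definition pois :: "real \<Rightarrow> nat pmf" where
  "pois r = (if 0 < r then poisson_pmf r else return_pmf 0)"

lemma pmf_pois: "0 \<le> r \<Longrightarrow> pmf (pois r) k = exp (- r) * r ^ k / fact k"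
  by (cases "r = 0") (auto simp: pois_def indicator_def)

fun listpmf :: "real list \<Rightarrow> nat list pmf" where
  "listpmf [] = return_pmf []"
| "listpmf (r # rs) = map_pmf (\<lambda>(x, xs). x # xs) (pair_pmf (pois r) (listpmf rs))"

lemma inj_cons: "inj (\<lambda>(x::nat, xs). x # xs)"
  by (auto simp: inj_def)

lemma pmf_listpmf:
  assumes "\<forall>r\<in>set rs. 0 \<le> r"
  shows "pmf (listpmf rs) a = (if length a = length rs then
      (\<Prod>i<length rs. exp (- (rs!i)) * (rs!i) ^ (a!i) / fact (a!i)) else 0)"
  using assms
proof (induction rs arbitrary: a)
  case Nil
  then show ?case by (cases a) (auto simp: indicator_def)
next
  case (Cons r rs)
  show ?case
  proof (cases a)
    case Nil
    have "[] \<notin> set_pmf (listpmf (r # rs))" by auto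
    then show ?thesis using Nil by (simp add: pmf_eq_0_set_pmf)
  next
    case (Cons x xs)
    have "pmf (listpmf (r # rs)) a = pmf (pair_pmf (pois r) (listpmf rs)) (x, xs)"
      unfolding Cons listpmf.simps using pmf_map_inj'[OF inj_cons, of _ "(x, xs)"] by simp
    also have "\<dots> = pmf (pois r) x * pmf (listpmf rs) xs" by (rule pmf_pair)
    finally have e: "pmf (listpmf (r # rs)) a = pmf (pois r) x * pmf (listpmf rs) xs" .
    have r0: "0 \<le> r" "\<forall>r\<in>set rs. 0 \<le> r" using Cons.prems by auto
    show ?thesis
    proof (cases "length xs = length rs")
      case True
      have "(\<Prod>i<length (r # rs). exp (- ((r # rs)!i)) * ((r # rs)!i) ^ (a!i) / fact (a!i))
          = exp (- r) * r ^ x / fact x * (\<Prod>i<length rs. exp (- (rs!i)) * (rs!i) ^ (xs!i) / fact (xs!i))"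
        unfolding \<open>a = x # xs\<close> length_Cons by (subst prod.lessThan_Suc_shift) simp
      then show ?thesis using e Cons.IH[OF r0(2), of xs] True pmf_pois[OF r0(1)] \<open>a = x # xs\<close> by simp
    next
      case False
      then show ?thesis using e Cons.IH[OF r0(2), of xs] \<open>a = x # xs\<close> by simp
    qed
  qed
qed

context
  fixes P :: "real set measure"
  assumes PP: "poisson_process P"
begin

lemma P_prob: "prob_space P" using PP unfolding poisson_process_def by simp

lemma P_sets: "sets P = sets lf_space" using PP unfolding poisson_process_def by simp

lemma P_space: "space P = \<Omega>" using sets_eq_imp_space_eq[OF P_sets] by simp

lemma P_formula:
  fixes n :: nat
  assumes "\<forall>i<n. Bs i \<in> sets borel \<and> bounded (Bs i)" "disjoint_family_on Bs {..<n}"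
  shows "measure P {A \<in> \<Omega>. \<forall>i<n. card (A \<inter> Bs i) = ks i}
          = (\<Prod>i<n. exp (- measure lborel (Bs i)) * measure lborel (Bs i) ^ ks i / fact (ks i))"
proof -
  have H: "\<forall>(n::nat) (Bs :: nat \<Rightarrow> real set) (ks :: nat \<Rightarrow> nat).
        (\<forall>i<n. Bs i \<in> sets borel \<and> bounded (Bs i)) \<and> disjoint_family_on Bs {..<n} \<longrightarrow>
        measure P {A \<in> space lf_space. \<forall>i<n. card (A \<inter> Bs i) = ks i}
          = (\<Prod>i<n. exp (- measure lborel (Bs i)) * measure lborel (Bs i) ^ ks i / fact (ks i))"
    using PP unfolding poisson_process_def by (elim conjE)
  show ?thesis using spec[OF spec[OF spec[OF H, of n], of Bs], of ks] assms by simp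
qed

lemma vecs_measP: "bb Bs \<Longrightarrow> vecs Bs \<in> P \<rightarrow>\<^sub>M count_space UNIV"
  using vecs_meas measurable_cong_sets[OF P_sets refl] by blast

lemma law:
  assumes "disj Ds" "bb Ds"
  shows "distr P (count_space UNIV) (vecs Ds) = measure_pmf (listpmf (map (\<lambda>D. measure lborel D) Ds))"
proof (rule measure_eqI_countable[where A = UNIV])
  fix a :: "nat list"
  interpret prob_space P by (rule P_prob)
  let ?n = "length Ds"
  have em: "emeasure (distr P (count_space UNIV) (vecs Ds)) {a} = emeasure P {A \<in> \<Omega>. vecs Ds A = a}"
    by (subst emeasure_distr[OF vecs_measP[OF assms(2)]]) (auto simp: P_space vimage_def Int_def conj_commute)
  show "emeasure (distr P (count_space UNIV) (vecs Ds)) {a} = emeasure (measure_pmf (listpmf (map (\<lambda>D. measure lborel D) Ds))) {a}"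
  proof (cases "length a = ?n")
    case False
    then have e: "{A \<in> \<Omega>. vecs Ds A = a} = {}" by (auto simp: vecs_def)
    show ?thesis unfolding em e using False by (simp add: emeasure_pmf_single pmf_listpmf)
  next
    case True
    have eqs: "{A \<in> \<Omega>. vecs Ds A = a} = {A \<in> \<Omega>. \<forall>i<?n. card (A \<inter> Ds ! i) = a ! i}"
      using True by (auto simp: vecs_def list_eq_iff_nth_eq)
    have dj: "disjoint_family_on (\<lambda>i. Ds ! i) {..<?n}"
      unfolding disjoint_family_on_def using disj_nth[OF assms(1)]
      by (metis Int_commute lessThan_iff nat_neq_iff)
    have "measure P {A \<in> \<Omega>. vecs Ds A = a} = (\<Prod>i<?n. exp (- measure lborel (Ds!i)) * measure lborel (Ds!i) ^ (a!i) / fact (a!i))"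
      unfolding eqs by (rule P_formula) (use assms(2) dj in \<open>auto simp: bb_def\<close>)
    then show ?thesis using True em
      by (simp add: emeasure_pmf_single pmf_listpmf emeasure_eq_measure)
  qed
qed (auto simp: sets_measure_pmf)

end



lemma translate_lf: "locally_finite_set A \<Longrightarrow> locally_finite_set (translate t A)"
proof (unfold locally_finite_set_def, intro allI impI)
  fix K :: "real set" assume A: "\<forall>K. bounded K \<longrightarrow> finite (A \<inter> K)" and K: "bounded K"
  have "translate t A \<inter> K = translate t (A \<inter> translate (-t) K)"
    unfolding translate_def by force
  moreover have "bounded (translate (-t) K)"
    unfolding translate_def using bounded_translation[OF K, of "-t"] by (simp add: add.commute)
  ultimately show "finite (translate t A \<inter> K)" using A unfolding translate_def by auto
qed

lemma translate_Int: "translate s A \<inter> B = translate s (A \<inter> translate (-s) B)"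
  unfolding translate_def by force

lemma inj_translate: "inj (\<lambda>x::real. x + s)" by (auto simp: inj_def)

lemma card_translate: "card (translate s X) = card X"
  unfolding translate_def by (rule card_image) (auto simp: inj_on_def)

lemma card_translate_Int: "card (translate s A \<inter> B) = card (A \<inter> translate (-s) B)"
  by (simp add: translate_Int card_translate)

lemma translate_vimage: "translate t B = (\<lambda>x. x - t) -` B"
  unfolding translate_def by force

lemma translate_borel: "B \<in> sets borel \<Longrightarrow> translate t B \<in> sets borel"
proof -
  assume B: "B \<in> sets borel"
  have "(\<lambda>x::real. x - t) \<in> borel_measurable borel" by simp
  from measurable_sets[OF this B] show ?thesis by (simp add: translate_vimage)
qed

lemma translate_bounded: "bounded B \<Longrightarrow> bounded (translate t B)"
  unfolding translate_def using bounded_translation[of B t] by (simp add: add.commute)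

lemma translate_lborel: "B \<in> sets borel \<Longrightarrow> measure lborel (translate t B) = measure lborel B"
proof -
  assume B: "B \<in> sets borel"
  have "emeasure (distr lborel borel ((+) (-t))) B = emeasure lborel ((+) (-t) -` B \<inter> space lborel)"
    by (rule emeasure_distr) (use B in auto)
  moreover have "(+) (-t) -` B \<inter> space lborel = translate t B"
    unfolding translate_vimage by auto
  ultimately have "emeasure lborel (translate t B) = emeasure lborel B"
    using lborel_distr_plus[of "-t"] by simp
  then show ?thesis unfolding measure_def by simp
qed

lemma bb_translate: "bb Bs \<Longrightarrow> bb (map (translate t) Bs)"
  unfolding bb_def by (auto intro: translate_borel translate_bounded)

lemma translate_meas: "translate s \<in> lf_space \<rightarrow>\<^sub>M lf_space"
proof -
  have "translate s \<in> measurable lf_space (measure_of \<Omega> Gen (\<lambda>x. 0))"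
  proof (rule measurable_measure_of[OF Gen_Pow])
    show "translate s \<in> space lf_space \<rightarrow> \<Omega>" using translate_lf by auto
    fix Y assume "Y \<in> Gen"
    then obtain B k where Y: "Y = {A \<in> \<Omega>. card (A \<inter> B) = k}" "B \<in> sets borel" "bounded B"
      unfolding Gen_def by auto
    have "translate s -` Y \<inter> space lf_space = {A \<in> \<Omega>. card (A \<inter> translate (-s) B) = k}"
      using Y(1) translate_lf by (auto simp: card_translate_Int)
    then show "translate s -` Y \<inter> space lf_space \<in> sets lf_space"
      using gen_sets[OF translate_borel[OF Y(2)] translate_bounded[OF Y(3)]] by simp
  qed
  then show ?thesis by (simp add: lf_eq)
qed

lemma vecs_translate: "vecs Bs (translate s A) = vecs (map (translate (-s)) Bs) A"
  by (simp add: vecs_def card_translate_Int)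

lemma translate_map_image: "translate t = image (\<lambda>x. x + t)"
  by (rule ext) (simp add: translate_def)

context
  fixes P :: "real set measure"
  assumes PP: "poisson_process P"
begin

lemma lawgen:
  assumes "bb Cs"
  shows "emeasure P {A \<in> \<Omega>. vecs Cs A \<in> K}
     = emeasure (measure_pmf (listpmf (map (\<lambda>D. measure lborel D) (atoms Cs)))) (phi (length Cs) -` K)"
proof -
  have "{A \<in> \<Omega>. vecs Cs A \<in> K} = vecs (atoms Cs) -` (phi (length Cs) -` K) \<inter> space P"
    using vecs_phi[OF _ assms] by (auto simp: P_space[OF PP])
  moreover have "emeasure (distr P (count_space UNIV) (vecs (atoms Cs))) (phi (length Cs) -` K)
     = emeasure P (vecs (atoms Cs) -` (phi (length Cs) -` K) \<inter> space P)"
    by (rule emeasure_distr[OF vecs_measP[OF PP bb_atoms[OF assms]]]) simp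
  ultimately show ?thesis
    using law[OF PP disj_atoms bb_atoms[OF assms]] by simp
qed

lemma stationary: "distr P lf_space (translate s) = P"
proof (rule measure_eqI_generator_eq[OF Galg_Int_stable, where \<Omega> = \<Omega> and A = "\<lambda>_. \<Omega>"])
  show "Galg \<subseteq> Pow \<Omega>" unfolding Galg_def by auto
  show "sets (distr P lf_space (translate s)) = sigma_sets \<Omega> Galg" by (simp add: sets_lf_Galg)
  show "sets P = sigma_sets \<Omega> Galg" by (simp add: sets_lf_Galg P_sets[OF PP])
  show "range (\<lambda>_. \<Omega>) \<subseteq> Galg" using Galg_I[of "[]" UNIV] by (auto simp: bb_def)
  show "(\<Union>i. \<Omega>) = \<Omega>" by simp
  interpret prob_space P by (rule P_prob[OF PP])
  have tm: "translate s \<in> P \<rightarrow>\<^sub>M lf_space" using translate_meas measurable_cong_sets[OF P_sets[OF PP] refl] by blast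
  interpret d: prob_space "distr P lf_space (translate s)" by (rule prob_space_distr[OF tm])
  show "emeasure (distr P lf_space (translate s)) \<Omega> \<noteq> \<infinity>" for i :: nat by simp
  fix X assume "X \<in> Galg"
  then obtain Bs K where X: "X = {A \<in> \<Omega>. vecs Bs A \<in> K}" "bb Bs" unfolding Galg_def by auto
  have "emeasure (distr P lf_space (translate s)) X = emeasure P (translate s -` X \<inter> space P)"
    by (rule emeasure_distr[OF tm]) (use X vecs_sets in auto)
  also have "translate s -` X \<inter> space P = {A \<in> \<Omega>. vecs (map (translate (-s)) Bs) A \<in> K}"
    using X translate_lf by (auto simp: P_space[OF PP] vecs_translate)
  also have "emeasure P \<dots> = emeasure P X"
    unfolding X(1) lawgen[OF X(2)] lawgen[OF bb_translate[OF X(2)]]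
  proof -
    have "atoms (map (translate (-s)) Bs) = map (translate (-s)) (atoms Bs)"
      unfolding translate_map_image by (rule atoms_image[OF inj_translate])
    moreover have "D \<in> set (atoms Bs) \<Longrightarrow> measure lborel (translate (-s) D) = measure lborel D" for D
      using bb_atoms[OF X(2)] by (intro translate_lborel) (auto simp: bb_def)
    ultimately show "emeasure (measure_pmf (listpmf (map (measure lborel) (atoms (map (translate (- s)) Bs))))) (phi (length (map (translate (- s)) Bs)) -` K) =
    emeasure (measure_pmf (listpmf (map (measure lborel) (atoms Bs)))) (phi (length Bs) -` K)"
      by (simp cong: map_cong)
  qed
  finally show "emeasure (distr P lf_space (translate s)) X = emeasure P X" .
qed

end



definition sd :: "'a set \<Rightarrow> 'a set \<Rightarrow> 'a set" where "sd X G = (X - G) \<union> (G - X)"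

lemma Galg_sub: "G \<in> Galg \<Longrightarrow> G \<subseteq> \<Omega>" unfolding Galg_def by auto

lemma Galg_compl: "G \<in> Galg \<Longrightarrow> \<Omega> - G \<in> Galg"
proof -
  assume "G \<in> Galg"
  then obtain Bs K where G: "G = {A \<in> \<Omega>. vecs Bs A \<in> K}" "bb Bs" unfolding Galg_def by auto
  then have "\<Omega> - G = {A \<in> \<Omega>. vecs Bs A \<in> - K}" by auto
  moreover have "{A \<in> \<Omega>. vecs Bs A \<in> - K} \<in> Galg" by (rule Galg_I[OF G(2)])
  ultimately show ?thesis by simp
qed

lemma Galg_Un: "G \<in> Galg \<Longrightarrow> H \<in> Galg \<Longrightarrow> G \<union> H \<in> Galg"
proof -
  assume G: "G \<in> Galg" and H: "H \<in> Galg"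
  have "G \<union> H = \<Omega> - ((\<Omega> - G) \<inter> (\<Omega> - H))" using Galg_sub[OF G] Galg_sub[OF H] by auto
  then show ?thesis using Galg_Int_stable Galg_compl[OF G] Galg_compl[OF H]
    by (metis Galg_compl Int_stableD)
qed

lemma Galg_empty: "{} \<in> Galg" using Galg_I[of "[]" "{}"] by (simp add: bb_def)

context
  fixes P :: "real set measure"
  assumes PP: "poisson_process P"
begin

definition approx :: "real set set \<Rightarrow> bool" where
  "approx X \<longleftrightarrow> (\<forall>e>0. \<exists>G\<in>Galg. measure P (sd X G) < e)"

lemma approx_Un:
  assumes X: "X \<in> sets lf_space" "approx X" and Y: "Y \<in> sets lf_space" "approx Y"
  shows "approx (X \<union> Y)"
  unfolding approx_def
proof (intro allI impI)
  interpret prob_space P by (rule P_prob[OF PP])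
  fix e :: real assume "e > 0"
  obtain G where G: "G \<in> Galg" "measure P (sd X G) < e/2" using X(2) \<open>e > 0\<close> unfolding approx_def by (meson half_gt_zero)
  obtain H where H: "H \<in> Galg" "measure P (sd Y H) < e/2" using Y(2) \<open>e > 0\<close> unfolding approx_def by (meson half_gt_zero)
  have ms: "sd X G \<in> sets P" "sd Y H \<in> sets P"
    using X Y G H Galg_sets by (auto simp: sd_def P_sets[OF PP])
  have "measure P (sd (X \<union> Y) (G \<union> H)) \<le> measure P (sd X G \<union> sd Y H)"
    by (rule finite_measure_mono) (use ms in \<open>auto simp: sd_def\<close>)
  also have "\<dots> \<le> measure P (sd X G) + measure P (sd Y H)"
    by (rule measure_Un_le) (use ms in auto)
  finally have "measure P (sd (X \<union> Y) (G \<union> H)) < e" using G H by simp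
  then show "\<exists>G\<in>Galg. measure P (sd (X \<union> Y) G) < e" using Galg_Un[OF G(1) H(1)] by blast
qed

lemma approx_all: "S \<in> sets lf_space \<Longrightarrow> approx S"
  unfolding sets_lf
proof (induction rule: sigma_sets.induct)
  case (Basic a)
  then have "a \<in> Galg" using Gen_Galg by auto
  then show ?case unfolding approx_def by (intro allI impI bexI[of _ a]) (auto simp: sd_def)
next
  case Empty
  then show ?case unfolding approx_def using Galg_empty by (intro allI impI bexI[of _ "{}"]) (auto simp: sd_def)
next
  case (Compl a)
  show ?case unfolding approx_def
  proof (intro allI impI)
    fix e :: real assume "e > 0"
    then obtain G where G: "G \<in> Galg" "measure P (sd a G) < e" using Compl.IH unfolding approx_def by auto
    have "a \<subseteq> \<Omega>" using Compl.hyps sigma_sets_into_sp[OF Gen_Pow] by auto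
    then have "sd (\<Omega> - a) (\<Omega> - G) = sd a G" using Galg_sub[OF G(1)] by (auto simp: sd_def)
    then show "\<exists>G\<in>Galg. measure P (sd (\<Omega> - a) G) < e" using G Galg_compl by metis
  qed
next
  case (Union a)
  interpret prob_space P by (rule P_prob[OF PP])
  have aS: "a i \<in> sets P" for i using Union.hyps by (simp add: P_sets[OF PP] sets_lf)
  define T where "T n = (\<Union>i<n. a i)" for n
  have TS: "T n \<in> sets P" for n unfolding T_def using aS by auto
  have Tapp: "approx (T n)" for n
  proof (induction n)
    case 0
    then show ?case unfolding T_def approx_def using Galg_empty by (intro allI impI bexI[of _ "{}"]) (auto simp: sd_def)
  next
    case (Suc n)
    have "T (Suc n) = T n \<union> a n" unfolding T_def by (simp add: lessThan_Suc Un_commute)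
    then show ?case using approx_Un[of "T n" "a n"] Suc Union.IH TS aS by (simp add: P_sets[OF PP])
  qed
  have UT: "(\<Union>n. T n) = (\<Union>i. a i)" unfolding T_def by blast
  have "(\<lambda>n. measure P (T n)) \<longlonglongrightarrow> measure P (\<Union>n. T n)"
    by (rule finite_Lim_measure_incseq) (use TS in \<open>auto simp: incseq_def T_def, meson less_le_trans lessThan_iff\<close>)
  then have lim: "(\<lambda>n. measure P (T n)) \<longlonglongrightarrow> measure P (\<Union>i. a i)" using UT by simp
  show ?case unfolding approx_def
  proof (intro allI impI)
    fix e :: real assume "e > 0"
    then obtain n where n: "dist (measure P (T n)) (measure P (\<Union>i. a i)) < e/2"
      using lim unfolding LIMSEQ_def by (meson half_gt_zero order_refl)
    obtain G where G: "G \<in> Galg" "measure P (sd (T n) G) < e/2" using Tapp[of n] \<open>e > 0\<close> unfolding approx_def by (meson half_gt_zero)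
    have US: "(\<Union>i. a i) \<in> sets P" using aS by auto
    have GS: "G \<in> sets P" using G Galg_sets P_sets[OF PP] by auto
    have sub: "T n \<subseteq> (\<Union>i. a i)" unfolding T_def by auto
    have "measure P (sd (\<Union>i. a i) G) \<le> measure P (((\<Union>i. a i) - T n) \<union> sd (T n) G)"
      by (rule finite_measure_mono) (use US GS TS sub in \<open>auto simp: sd_def\<close>)
    also have "\<dots> \<le> measure P ((\<Union>i. a i) - T n) + measure P (sd (T n) G)"
      by (rule measure_Un_le) (use US GS TS in \<open>auto simp: sd_def\<close>)
    also have "measure P ((\<Union>i. a i) - T n) = measure P (\<Union>i. a i) - measure P (T n)"
      by (rule finite_measure_Diff) (use US TS sub in auto)
    finally have "measure P (sd (\<Union>i. a i) G) < e" using n G(2) unfolding dist_real_def abs_less_iff by linarith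
    then show "\<exists>G\<in>Galg. measure P (sd (\<Union>i. a i) G) < e" using G by blast
  qed
qed

end



lemma parity:
  assumes pc: "proper_2colouring A C" and lf: "locally_finite_set A"
  shows "a \<in> A \<Longrightarrow> b \<in> A \<Longrightarrow> a \<le> b \<Longrightarrow> card (A \<inter> {a..<b}) = n \<Longrightarrow>
     ((a \<in> fst C) \<longleftrightarrow> (b \<in> fst C)) \<longleftrightarrow> even n"
proof (induction n arbitrary: a)
  case 0
  have "finite (A \<inter> {a..<b})" by (rule lf_finite[OF lf]) simp
  then have "A \<inter> {a..<b} = {}" using 0 by simp
  then have "a = b" using 0 by force
  then show ?case by simp
next
  case (Suc m)
  have fin: "finite (A \<inter> {a..<b})" by (rule lf_finite[OF lf]) simp
  have "a \<noteq> b" using Suc.prems by auto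
  then have ab: "a < b" using Suc.prems by simp
  define S where "S = A \<inter> {a<..b}"
  have finS: "finite S" unfolding S_def by (rule lf_finite[OF lf]) simp
  have bS: "b \<in> S" using Suc.prems ab by (simp add: S_def)
  define a' where "a' = Min S"
  have a'S: "a' \<in> S" unfolding a'_def using Min_in[OF finS] bS by blast
  have a'le: "a' \<le> z" if "z \<in> S" for z using finS that unfolding a'_def by simp
  have cons: "consecutive A a a'"
    unfolding consecutive_def using a'S a'le Suc.prems(1) by (force simp: S_def)
  have a'b: "a' \<le> b" using a'le bS by simp
  have "A \<inter> {a..<b} = insert a (A \<inter> {a'..<b})"
  proof
    show "A \<inter> {a..<b} \<subseteq> insert a (A \<inter> {a'..<b})"
    proof
      fix z assume z: "z \<in> A \<inter> {a..<b}"
      show "z \<in> insert a (A \<inter> {a'..<b})"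
      proof (cases "z = a")
        case False
        then have "z \<in> S" using z by (auto simp: S_def)
        then show ?thesis using a'le z by auto
      qed simp
    qed
    show "insert a (A \<inter> {a'..<b}) \<subseteq> A \<inter> {a..<b}"
      using Suc.prems ab a'S by (auto simp: S_def)
  qed
  moreover have "a \<notin> A \<inter> {a'..<b}" using a'S by (auto simp: S_def)
  moreover have "finite (A \<inter> {a'..<b})" by (rule lf_finite[OF lf]) simp
  ultimately have "card (A \<inter> {a'..<b}) = m" using Suc.prems(4) by simp
  then have IH: "((a' \<in> fst C) \<longleftrightarrow> (b \<in> fst C)) \<longleftrightarrow> even m"
    using Suc.IH[of a'] a'S a'b Suc.prems by (auto simp: S_def)
  have "a \<in> fst C \<union> snd C" "a' \<in> fst C \<union> snd C" "fst C \<inter> snd C = {}"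
    using pc Suc.prems(1) a'S unfolding proper_2colouring_def by (auto simp: S_def)
  moreover have "\<not> (a \<in> fst C \<and> a' \<in> fst C)" "\<not> (a \<in> snd C \<and> a' \<in> snd C)"
    using pc cons unfolding proper_2colouring_def by auto
  ultimately have "(a \<in> fst C) \<longleftrightarrow> \<not> (a' \<in> fst C)" by blast
  then show ?case using IH by auto
qed





definition Pt :: "real set \<Rightarrow> real set \<Rightarrow> real \<Rightarrow> bool" where
  "Pt C A s \<longleftrightarrow> (\<exists>q\<in>\<rat>. 0 < q \<and> 1 \<le> card (A \<inter> {s..<s+q}) \<and> card (C \<inter> {s..<s+q}) = card (A \<inter> {s..<s+q}))"

lemma Pt_iff:
  assumes lf: "locally_finite_set A" and CA: "C \<subseteq> A" and x: "x \<in> A" "s \<le> x" "A \<inter> {s..<x} = {}"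
    and s: "s \<in> \<rat>"
  shows "Pt C A s \<longleftrightarrow> x \<in> C"
proof
  assume "Pt C A s"
  then obtain q where q: "0 < q" "1 \<le> card (A \<inter> {s..<s+q})" "card (C \<inter> {s..<s+q}) = card (A \<inter> {s..<s+q})"
    using \<open>Pt C A s\<close> unfolding Pt_def by blast
  have fin: "finite (A \<inter> {s..<s+q})" by (rule lf_finite[OF lf]) simp
  have eq: "C \<inter> {s..<s+q} = A \<inter> {s..<s+q}"
  proof (rule card_subset_eq[OF fin _ q(3)])
    show "C \<inter> {s..<s+q} \<subseteq> A \<inter> {s..<s+q}" using CA by blast
  qed
  have ne: "A \<inter> {s..<s+q} \<noteq> {}" using q(2) by (cases "A \<inter> {s..<s+q} = {}") simp_all
  then obtain y where y: "y \<in> A \<inter> {s..<s+q}" by blast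
  have "x \<le> y"
  proof (rule ccontr)
    assume "\<not> x \<le> y"
    then have "y \<in> A \<inter> {s..<x}" using y by auto
    with x(3) show False by blast
  qed
  then have "x \<in> A \<inter> {s..<s+q}" using x(1,2) y by simp
  then show "x \<in> C" using eq by blast
next
  assume xC: "x \<in> C"
  define F' where "F' = A \<inter> {x<..x+1}"
  have finF: "finite F'" unfolding F'_def by (rule lf_finite[OF lf]) simp
  define r where "r = (if F' = {} then x + 1 else Min F')"
  have xr: "x < r" using finF unfolding r_def by (auto simp: F'_def)
  have noA: "z \<notin> A" if "x < z" "z < r" for z
  proof
    assume "z \<in> A"
    show False
    proof (cases "F' = {}")
      case True
      then show False using that \<open>z \<in> A\<close> unfolding r_def F'_def by auto
    next
      case False
      have rF: "r \<in> F'" unfolding r_def using False Min_in[OF finF] by simp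
      then have "r \<le> x + 1" unfolding F'_def by simp
      then have "z \<in> F'" using that \<open>z \<in> A\<close> unfolding F'_def by simp
      then have "r \<le> z" using False finF unfolding r_def by simp
      then show False using that by simp
    qed
  qed
  obtain q' where q': "q' \<in> \<rat>" "x < q'" "q' < r" using Rats_dense_in_real[OF xr] by auto
  define q where "q = q' - s"
  have qQ: "q \<in> \<rat>" unfolding q_def using q' s by (simp add: Rats_diff)
  have eqA: "A \<inter> {s..<s+q} = {x}"
  proof
    show "{x} \<subseteq> A \<inter> {s..<s+q}" using x q' by (auto simp: q_def)
    show "A \<inter> {s..<s+q} \<subseteq> {x}"
    proof
      fix z assume z: "z \<in> A \<inter> {s..<s+q}"
      have "\<not> z < x" using z x(3) by auto
      moreover have "\<not> x < z" using noA[of z] z q' by (auto simp: q_def)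
      ultimately show "z \<in> {x}" by simp
    qed
  qed
  have eqC: "C \<inter> {s..<s+q} = {x}" using eqA CA xC by auto
  have "0 < q" using x q' by (simp add: q_def)
  then show "Pt C A s" unfolding Pt_def using qQ eqA eqC by (intro bexI[of _ q]) auto
qed

lemma first_point:
  assumes lf: "locally_finite_set A" and y: "y \<in> A" "s \<le> y"
  shows "\<exists>x\<in>A. s \<le> x \<and> x \<le> y \<and> A \<inter> {s..<x} = {}"
proof -
  define S where "S = A \<inter> {s..y}"
  have fin: "finite S" unfolding S_def by (rule lf_finite[OF lf]) simp
  have yS: "y \<in> S" using y by (simp add: S_def)
  define x where "x = Min S"
  have xS: "x \<in> S" unfolding x_def using Min_in[OF fin] yS by blast
  have "x \<le> z" if "z \<in> S" for z using fin that unfolding x_def by simp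
  then have "A \<inter> {s..<x} = {}"
  proof -
    have "z \<notin> A \<inter> {s..<x}" for z
    proof
      assume z: "z \<in> A \<inter> {s..<x}"
      have "x \<le> y" using xS by (simp add: S_def)
      then have "z \<in> S" using z by (simp add: S_def)
      then have "x \<le> z" using \<open>\<And>z. z \<in> S \<Longrightarrow> x \<le> z\<close> by blast
      then show False using z by simp
    qed
    then show ?thesis by blast
  qed
  then show ?thesis using xS by (auto simp: S_def)
qed

lemma key_parity:
  assumes pc: "proper_2colouring A C" and lf: "locally_finite_set A"
    and t: "0 \<le> t" "t \<in> \<rat>" and y: "y \<in> A" "t \<le> y"
  shows "(Pt (fst C) A 0 \<longleftrightarrow> Pt (fst C) A t) \<longleftrightarrow> even (card (A \<inter> {0..<t}))"
proof -
  have CA: "fst C \<subseteq> A" using pc unfolding proper_2colouring_def by auto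
  obtain x0 where x0: "x0 \<in> A" "0 \<le> x0" "A \<inter> {0..<x0} = {}" using first_point[OF lf y(1), of 0] y t by auto
  obtain xt where xt: "xt \<in> A" "t \<le> xt" "A \<inter> {t..<xt} = {}" using first_point[OF lf y] by auto
  have p0: "Pt (fst C) A 0 \<longleftrightarrow> x0 \<in> fst C" by (rule Pt_iff[OF lf CA x0]) simp
  have pt: "Pt (fst C) A t \<longleftrightarrow> xt \<in> fst C" by (rule Pt_iff[OF lf CA xt t(2)])
  have le: "x0 \<le> xt"
  proof (rule ccontr)
    assume "\<not> x0 \<le> xt"
    then have "xt \<in> A \<inter> {0..<x0}" using xt t by auto
    with x0(3) show False by blast
  qed
  have "A \<inter> {x0..<xt} = A \<inter> {0..<t}"
  proof
    show "A \<inter> {x0..<xt} \<subseteq> A \<inter> {0..<t}"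
    proof
      fix z assume z: "z \<in> A \<inter> {x0..<xt}"
      have "\<not> t \<le> z" using z xt(3) by auto
      then show "z \<in> A \<inter> {0..<t}" using z x0 by auto
    qed
    show "A \<inter> {0..<t} \<subseteq> A \<inter> {x0..<xt}"
    proof
      fix z assume z: "z \<in> A \<inter> {0..<t}"
      have "\<not> z < x0" using z x0(3) by auto
      then show "z \<in> A \<inter> {x0..<xt}" using z xt by auto
    qed
  qed
  then show ?thesis using parity[OF pc lf x0(1) xt(1) le refl] p0 pt by simp
qed




lemma pre_count_sets:
  "f \<in> M \<rightarrow>\<^sub>M count_space UNIV \<Longrightarrow> {x \<in> space M. Q (f x)} \<in> sets M"
proof -
  assume f: "f \<in> M \<rightarrow>\<^sub>M count_space UNIV"
  from measurable_sets[OF f, of "{k. Q k}"] show ?thesis by (simp add: vimage_def Int_def conj_commute)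
qed

lemma eq_count_sets:
  fixes f g :: "'a \<Rightarrow> nat"
  assumes f: "f \<in> M \<rightarrow>\<^sub>M count_space UNIV" and g: "g \<in> M \<rightarrow>\<^sub>M count_space UNIV"
  shows "{x \<in> space M. f x = g x} \<in> sets M"
proof -
  have "{x \<in> space M. f x = g x} = {x \<in> space M. \<exists>k::nat. f x = k \<and> g x = k}" by auto
  also have "\<dots> \<in> sets M"
  proof (rule sets.sets_Collect_countable_Ex)
    fix k :: nat
    have "{x \<in> space M. f x = k \<and> g x = k} = {x \<in> space M. f x = k} \<inter> {x \<in> space M. g x = k}" by auto
    then show "{x \<in> space M. f x = k \<and> g x = k} \<in> sets M"
      using pre_count_sets[OF f, of "\<lambda>y. y = k"] pre_count_sets[OF g, of "\<lambda>y. y = k"] by auto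
  qed
  finally show ?thesis .
qed

lemma Ico_bb: "{a..<b::real} \<in> sets borel" "bounded {a..<b::real}" by auto

lemma translate_Ico: "translate t {a..<b} = {a + t..<b + t}"
  unfolding translate_def by simp

context
  fixes P :: "real set measure"
  assumes PP: "poisson_process P"
begin

lemma prob_zero_count:
  assumes "B \<in> sets borel" "bounded B"
  shows "measure P {A \<in> \<Omega>. card (A \<inter> B) = 0} = exp (- measure lborel B)"
proof -
  have "{A \<in> \<Omega>. card (A \<inter> B) = 0} = {A \<in> \<Omega>. \<forall>i<(1::nat). card (A \<inter> (\<lambda>_. B) i) = (\<lambda>_. 0) i}" by auto
  also have "measure P \<dots> = (\<Prod>i<(1::nat). exp (- measure lborel B) * measure lborel B ^ 0 / fact 0)"
    by (rule P_formula[OF PP]) (use assms in \<open>auto simp: disjoint_family_on_def\<close>)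
  finally show ?thesis by simp
qed

lemma AE_points_after:
  "AE A in P. A \<inter> {t..} \<noteq> {}"
proof -
  interpret prob_space P by (rule P_prob[OF PP])
  define N where "N = {A \<in> \<Omega>. \<forall>k::nat. card (A \<inter> {t..<t + real k}) = 0}"
  have NS0: "{A \<in> space lf_space. \<forall>k::nat. card (A \<inter> {t..<t + real k}) = 0} \<in> sets lf_space"
  proof (rule sets.sets_Collect_countable_All)
    fix k :: nat
    show "{A \<in> space lf_space. card (A \<inter> {t..<t + real k}) = 0} \<in> sets lf_space"
      using gen_sets[OF Ico_bb, of t "t + real k" 0] by simp
  qed
  have NS: "N \<in> sets P" unfolding N_def P_sets[OF PP] using NS0 by simp
  have sub: "{A \<in> space P. \<not> A \<inter> {t..} \<noteq> {}} \<subseteq> N"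
  proof
    fix A assume "A \<in> {A \<in> space P. \<not> A \<inter> {t..} \<noteq> {}}"
    then have A: "A \<in> \<Omega>" "A \<inter> {t..} = {}" by (simp_all add: P_space[OF PP])
    have "A \<inter> {t..<t + real k} \<subseteq> A \<inter> {t..}" for k by (intro Int_mono) auto
    then have "A \<inter> {t..<t + real k} = {}" for k using A(2) by (metis subset_empty)
    then show "A \<in> N" unfolding N_def using A(1) by simp
  qed
  have bound: "measure P N \<le> exp (- real k)" for k :: nat
  proof -
    have "N \<subseteq> {A \<in> \<Omega>. card (A \<inter> {t..<t + real k}) = 0}" unfolding N_def by blast
    moreover have "{A \<in> \<Omega>. card (A \<inter> {t..<t + real k}) = 0} \<in> sets P"
      unfolding P_sets[OF PP] by (rule gen_sets[OF Ico_bb])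
    ultimately have "measure P N \<le> measure P {A \<in> \<Omega>. card (A \<inter> {t..<t + real k}) = 0}"
      by (rule finite_measure_mono)
    also have "\<dots> = exp (- real k)" using prob_zero_count[OF Ico_bb] by simp
    finally show ?thesis .
  qed
  have "measure P N = 0"
  proof (rule ccontr)
    assume "measure P N \<noteq> 0"
    then have pos: "measure P N > 0" using measure_nonneg[of P N] by linarith
    define k where "k = nat \<lceil>- ln (measure P N)\<rceil> + 1"
    have "- ln (measure P N) < real k" unfolding k_def using of_nat_ceiling[of "- ln (measure P N)"] by linarith
    then have "exp (- real k) < exp (ln (measure P N))" by simp
    then have "exp (- real k) < measure P N" using pos by simp
    then show False using bound[of k] by simp
  qed
  then have "emeasure P N = 0" using emeasure_eq_measure by simp
  then show ?thesis by (rule AE_I[OF sub _ NS])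
qed

end



lemma pmf_lower:
  assumes rs: "\<forall>r\<in>set rs. 0 \<le> r" and KY: "\<And>xs. 0 # xs \<in> KY \<or> 1 # xs \<in> KY"
  shows "exp (-1) \<le> measure (measure_pmf (listpmf (1 # rs))) KY"
proof -
  define U where "U = {xs. 0 # xs \<in> KY}"
  define p where "p = pair_pmf (pois 1) (listpmf rs)"
  have sub: "{0} \<times> U \<union> {1} \<times> (- U) \<subseteq> (\<lambda>(x, xs). x # xs) -` KY"
    using KY unfolding U_def by (auto, metis One_nat_def)
  have "measure (measure_pmf (listpmf (1 # rs))) KY = measure (measure_pmf p) ((\<lambda>(x, xs). x # xs) -` KY)"
    by (simp add: p_def)
  also have "\<dots> \<ge> measure (measure_pmf p) ({0} \<times> U \<union> {1} \<times> (- U))"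
    by (rule measure_pmf.finite_measure_mono[OF sub]) simp
  moreover have "measure (measure_pmf p) ({0} \<times> U \<union> {1} \<times> (- U))
      = measure (measure_pmf p) ({0} \<times> U) + measure (measure_pmf p) ({1} \<times> (- U))"
    by (rule measure_Union) (auto simp: measure_pmf.emeasure_eq_measure)
  moreover have "measure (measure_pmf p) ({0} \<times> U) = exp (-1) * measure (measure_pmf (listpmf rs)) U"
    unfolding p_def by (subst measure_pmf_prob_product) (auto simp: measure_pmf_single pmf_pois)
  moreover have "measure (measure_pmf p) ({1} \<times> (- U)) = exp (-1) * measure (measure_pmf (listpmf rs)) (- U)"
    unfolding p_def by (subst measure_pmf_prob_product) (auto simp: measure_pmf_single pmf_pois)
  moreover have "measure (measure_pmf (listpmf rs)) (- U) = 1 - measure (measure_pmf (listpmf rs)) U"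
    using measure_pmf.prob_compl[of U "listpmf rs"] by (simp add: Compl_eq_Diff_UNIV)
  ultimately show ?thesis by (simp add: algebra_simps)
qed




lemma vecs_append: "vecs (Xs @ Ys) A = vecs Xs A @ vecs Ys A" by (simp add: vecs_def)
lemma length_vecs[simp]: "length (vecs Xs A) = length Xs" by (simp add: vecs_def)
lemma vecs_Cons: "vecs (X # Xs) A = card (A \<inter> X) # vecs Xs A" by (simp add: vecs_def)

context
  fixes P :: "real set measure" and F :: "real set \<Rightarrow> real set \<times> real set"
  assumes PP: "poisson_process P"
    and Fm: "F \<in> lf_space \<rightarrow>\<^sub>M (lf_space \<Otimes>\<^sub>M lf_space)"
    and eqv: "\<forall>t. \<forall>A \<in> space lf_space. F (translate t A) = (translate t (fst (F A)), translate t (snd (F A)))"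
begin

lemma FstF_meas: "(\<lambda>A. fst (F A)) \<in> lf_space \<rightarrow>\<^sub>M lf_space"
  using measurable_compose[OF Fm measurable_fst] by (simp add: comp_def)

lemma cntF_meas: "B \<in> sets borel \<Longrightarrow> bounded B \<Longrightarrow> (\<lambda>A. card (fst (F A) \<inter> B)) \<in> lf_space \<rightarrow>\<^sub>M count_space UNIV"
  using measurable_compose[OF FstF_meas cnt_meas] by simp

lemma S_sets: "{A \<in> \<Omega>. Pt (fst (F A)) A s} \<in> sets lf_space"
proof -
  have "{A \<in> \<Omega>. Pt (fst (F A)) A s} = {A \<in> space lf_space. \<exists>q\<in>\<rat>. 0 < q \<and> 1 \<le> card (A \<inter> {s..<s+q})
     \<and> card (fst (F A) \<inter> {s..<s+q}) = card (A \<inter> {s..<s+q})}"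
    unfolding Pt_def by simp
  also have "\<dots> \<in> sets lf_space"
  proof (rule sets.sets_Collect_countable_Ex'[OF _ countable_rat])
    fix q :: real
    show "{A \<in> space lf_space. 0 < q \<and> 1 \<le> card (A \<inter> {s..<s+q}) \<and> card (fst (F A) \<inter> {s..<s+q}) = card (A \<inter> {s..<s+q})} \<in> sets lf_space"
    proof (cases "0 < q")
      case True
      have "{A \<in> space lf_space. 0 < q \<and> 1 \<le> card (A \<inter> {s..<s+q}) \<and> card (fst (F A) \<inter> {s..<s+q}) = card (A \<inter> {s..<s+q})}
        = {A \<in> space lf_space. 1 \<le> card (A \<inter> {s..<s+q})} \<inter> {A \<in> space lf_space. card (fst (F A) \<inter> {s..<s+q}) = card (A \<inter> {s..<s+q})}"
        using True by blast
      moreover have "{A \<in> space lf_space. 1 \<le> card (A \<inter> {s..<s+q})} \<in> sets lf_space"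
        by (rule pre_count_sets[OF cnt_meas[OF Ico_bb]])
      moreover have "{A \<in> space lf_space. card (fst (F A) \<inter> {s..<s+q}) = card (A \<inter> {s..<s+q})} \<in> sets lf_space"
        by (rule eq_count_sets[OF cntF_meas[OF Ico_bb] cnt_meas[OF Ico_bb]])
      ultimately show ?thesis by simp
    qed simp
  qed
  finally show ?thesis .
qed

lemma Pt_shift:
  assumes "A \<in> \<Omega>"
  shows "Pt (fst (F (translate (-t) A))) (translate (-t) A) 0 \<longleftrightarrow> Pt (fst (F A)) A t"
proof -
  have f: "fst (F (translate (-t) A)) = translate (-t) (fst (F A))" using eqv assms by simp
  have h: "card (translate (-t) X \<inter> {0..<0+q}) = card (X \<inter> {t..<t+q})" for X q
    by (simp add: card_translate_Int translate_Ico add.commute)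
  show ?thesis unfolding Pt_def f h ..
qed

end



context
  fixes P :: "real set measure" and F :: "real set \<Rightarrow> real set \<times> real set"
  assumes PP: "poisson_process P"
    and Fm: "F \<in> lf_space \<rightarrow>\<^sub>M (lf_space \<Otimes>\<^sub>M lf_space)"
    and AEp: "AE A in P. proper_2colouring A (F A)"
    and eqv: "\<forall>t. \<forall>A \<in> space lf_space. F (translate t A) = (translate t (fst (F A)), translate t (snd (F A)))"
begin

lemma main_False: False
proof -
  interpret prob_space P by (rule P_prob[OF PP])
  define S where "S = {A \<in> \<Omega>. Pt (fst (F A)) A 0}"
  have SS: "S \<in> sets lf_space" unfolding S_def by (rule S_sets[OF PP Fm eqv])
  have ap: "\<forall>e>0. \<exists>G\<in>Galg. measure P (sd S G) < e"
    using approx_all[OF PP SS] by (simp add: approx_def[OF PP])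
  obtain G where G: "G \<in> Galg" "measure P (sd S G) < 1/8"
    using ap[rule_format, of "1/8"] by auto
  obtain Bs K where GK: "G = {A \<in> \<Omega>. vecs Bs A \<in> K}" and bbB: "bb Bs" using G(1) unfolding Galg_def by blast
  obtain r where r: "\<forall>x\<in>\<Union>(set Bs). \<bar>x\<bar> \<le> r" using bounded_Union_list[OF bbB] unfolding bounded_real by blast
  define M :: nat where "M = nat \<lceil>r\<rceil> + 1"
  have BM: "B \<subseteq> {- real M..<real M}" if "B \<in> set Bs" for B
  proof
    fix x assume "x \<in> B"
    then have "\<bar>x\<bar> \<le> r" using r that by blast
    moreover have "r < real M" unfolding M_def using of_nat_ceiling[of r] by linarith
    ultimately show "x \<in> {- real M..<real M}" by (simp add: abs_le_iff)
  qed
  define t :: real where "t = real (2 * M + 1)"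
  define sh where "sh = translate (-t)"
  have tQ: "t \<in> \<rat>" unfolding t_def by (rule Rats_of_nat)
  have t0: "0 \<le> t" unfolding t_def by simp
  have shm: "sh \<in> P \<rightarrow>\<^sub>M lf_space" unfolding sh_def
    using translate_meas measurable_cong_sets[OF P_sets[OF PP] refl] by blast
  have stat: "measure P (sh -` X \<inter> space P) = measure P X" if "X \<in> sets lf_space" for X
    using measure_distr[OF shm that] stationary[OF PP, of "-t"] unfolding sh_def by simp
  define E1 where "E1 = sd S G"
  have GS: "G \<in> sets lf_space" using G(1) Galg_sets by auto
  have E1S: "E1 \<in> sets lf_space" unfolding E1_def sd_def using SS GS by auto
  define E2 where "E2 = sh -` E1 \<inter> \<Omega>"
  have E2S: "E2 \<in> sets lf_space" unfolding E2_def using measurable_sets[OF shm E1S] P_space[OF PP] P_sets[OF PP] by simp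
  have mE2: "measure P E2 = measure P E1" unfolding E2_def using stat[OF E1S] P_space[OF PP] by simp
  define Y where "Y = {A \<in> \<Omega>. ((A \<in> G \<longleftrightarrow> sh A \<in> G) \<longleftrightarrow> odd (card (A \<inter> {0..<t})))}"
  have AEY: "AE A in P. A \<in> Y \<longrightarrow> A \<in> E1 \<union> E2"
    using AEp AE_points_after[OF PP, of t] AE_space
  proof eventually_elim
    case (elim A)
    then have pc: "proper_2colouring A (F A)" and ne: "A \<inter> {t..} \<noteq> {}" and AO: "A \<in> \<Omega>"
      by (simp_all add: P_space[OF PP])
    obtain y where y: "y \<in> A" "t \<le> y" using ne by blast
    have kp: "(Pt (fst (F A)) A 0 \<longleftrightarrow> Pt (fst (F A)) A t) \<longleftrightarrow> even (card (A \<inter> {0..<t}))"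
      by (rule key_parity[OF pc _ t0 tQ y]) (use AO in simp)
    have shO: "sh A \<in> \<Omega>" unfolding sh_def using AO translate_lf by simp
    have s1: "A \<in> S \<longleftrightarrow> Pt (fst (F A)) A 0" unfolding S_def using AO by simp
    have s2: "sh A \<in> S \<longleftrightarrow> Pt (fst (F A)) A t"
      unfolding S_def sh_def using Pt_shift[OF PP Fm eqv AO, of t] shO[unfolded sh_def] by simp
    show ?case
    proof
      assume AY: "A \<in> Y"
      show "A \<in> E1 \<union> E2"
      proof (rule ccontr)
        assume "A \<notin> E1 \<union> E2"
        then have n1: "A \<notin> sd S G" and n2: "sh A \<notin> sd S G" using AO unfolding E1_def E2_def by auto
        from n1 have g1: "A \<in> S \<longleftrightarrow> A \<in> G" unfolding sd_def by blast
        from n2 have g2: "sh A \<in> S \<longleftrightarrow> sh A \<in> G" unfolding sd_def by blast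
        from AY have "(A \<in> G \<longleftrightarrow> sh A \<in> G) \<longleftrightarrow> odd (card (A \<inter> {0..<t}))" unfolding Y_def by simp
        then show False using kp s1 s2 g1 g2 by blast
      qed
    qed
  qed
  have E12: "E1 \<union> E2 \<in> sets P" using E1S E2S P_sets[OF PP] by simp
  have "measure P Y \<le> measure P (E1 \<union> E2)" by (rule finite_measure_mono_AE[OF AEY E12])
  also have "\<dots> \<le> measure P E1 + measure P E2" by (rule measure_Un_le) (use E1S E2S P_sets[OF PP] in auto)
  also have "\<dots> < 1/4" using mE2 G(2) unfolding E1_def by simp
  finally have Ylt: "measure P Y < 1/4" .
  define n where "n = length Bs"
  define Ls where "Ls = Bs @ map (translate t) Bs @ [{0..<real M}, {t - real M..<t}]"
  define Z where "Z = {real M..<real M + 1}"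
  define L where "L = length Ls"
  define KY where "KY = {v. v \<noteq> [] \<and> ((take n (phi L (tl v)) \<in> K \<longleftrightarrow> take n (drop n (phi L (tl v))) \<in> K)
      \<longleftrightarrow> odd (phi L (tl v) ! (2*n) + hd v + phi L (tl v) ! (2*n+1)))}"
  have bbLs: "bb Ls" unfolding Ls_def using bbB bb_translate[OF bbB] by (auto simp: bb_def)
  have bbD: "bb (Z # atoms Ls)" using bb_atoms[OF bbLs] unfolding Z_def by (simp add: bb_def)
  have tM: "t - real M = real M + 1" unfolding t_def by simp
  have ZLs: "X \<inter> Z = {}" if XL: "X \<in> set Ls" for X
  proof -
    have "X \<subseteq> {x. x < real M \<or> real M + 1 \<le> x}"
    proof -
      consider (a) "X \<in> set Bs" | (b) B where "B \<in> set Bs" "X = translate t B"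
        | (c) "X = {0..<real M}" | (d) "X = {t - real M..<t}"
        using XL unfolding Ls_def by auto
      then show ?thesis
      proof cases
        case a
        then show ?thesis using BM[of X] by auto
      next
        case b
        have "X \<subseteq> translate t {- real M..<real M}" unfolding b(2) translate_def using BM[OF b(1)] by auto
        also have "\<dots> = {- real M + t..<real M + t}" by (rule translate_Ico)
        finally show ?thesis unfolding t_def by auto
      next
        case c
        then show ?thesis by auto
      next
        case d
        then show ?thesis using tM by auto
      qed
    qed
    then show ?thesis unfolding Z_def by auto
  qed
  have disjD: "disj (Z # atoms Ls)"
  proof -
    have "Z \<inter> \<Union>(set Ls) = {}" using ZLs by blast
    then show ?thesis using disj_atoms[of Ls] by (simp add: Union_atoms)
  qed
  have YKY: "Y = {A \<in> \<Omega>. vecs (Z # atoms Ls) A \<in> KY}"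
  proof (rule set_eqI)
    fix A
    show "A \<in> Y \<longleftrightarrow> A \<in> {A \<in> \<Omega>. vecs (Z # atoms Ls) A \<in> KY}"
    proof (cases "A \<in> \<Omega>")
      case False
      then show ?thesis unfolding Y_def by simp
    next
      case AO: True
    define w where "w = vecs Ls A"
    have wphi: "phi L (vecs (atoms Ls) A) = w" unfolding w_def L_def using vecs_phi[OF _ bbLs] AO by simp
    have w: "w = vecs Bs A @ vecs (map (translate t) Bs) A @ [card (A \<inter> {0..<real M}), card (A \<inter> {t - real M..<t})]"
      unfolding w_def Ls_def by (simp add: vecs_append vecs_Cons vecs_def)
    have w1: "take n w = vecs Bs A" unfolding w n_def by simp
    have w2: "take n (drop n w) = vecs (map (translate t) Bs) A" unfolding w n_def by simp
    have w3: "w ! (2*n) = card (A \<inter> {0..<real M})" unfolding w n_def by (simp add: nth_append)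
    have w4: "w ! (2*n+1) = card (A \<inter> {t - real M..<t})" unfolding w n_def by (simp add: nth_append)
    have g1: "A \<in> G \<longleftrightarrow> vecs Bs A \<in> K" unfolding GK using AO by simp
    have g2: "sh A \<in> G \<longleftrightarrow> vecs (map (translate t) Bs) A \<in> K"
      unfolding GK sh_def using AO translate_lf vecs_translate[of Bs "-t" A] by simp
    have fin: "finite (A \<inter> X)" if "bounded X" for X using lf_finite AO that by simp
    have "{0..<t} = {0..<real M} \<union> Z \<union> {t - real M..<t}" unfolding Z_def tM t_def by auto
    then have "A \<inter> {0..<t} = (A \<inter> {0..<real M}) \<union> (A \<inter> Z) \<union> (A \<inter> {t - real M..<t})" by blast
    moreover have "(A \<inter> {0..<real M}) \<inter> (A \<inter> Z) = {}" unfolding Z_def by auto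
    moreover have "((A \<inter> {0..<real M}) \<union> (A \<inter> Z)) \<inter> (A \<inter> {t - real M..<t}) = {}" unfolding Z_def tM by auto
    ultimately have cnt: "card (A \<inter> {0..<t}) = card (A \<inter> {0..<real M}) + card (A \<inter> Z) + card (A \<inter> {t - real M..<t})"
      using fin[of "{0..<real M}"] fin[of Z] fin[of "{t - real M..<t}"] unfolding Z_def
      by (simp add: card_Un_disjoint)
    have v: "vecs (Z # atoms Ls) A = card (A \<inter> Z) # vecs (atoms Ls) A" by (rule vecs_Cons)
    have eq: "A \<in> Y \<longleftrightarrow> vecs (Z # atoms Ls) A \<in> KY"
      unfolding Y_def KY_def v using AO wphi w1 w2 w3 w4 g1 g2 cnt by (simp add: add.commute add.left_commute)
    show ?thesis using eq AO by simp
    qed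
  qed
  have "measure P Y = measure (distr P (count_space UNIV) (vecs (Z # atoms Ls))) KY"
    unfolding YKY by (subst measure_distr[OF vecs_measP[OF PP bbD]]) (auto simp: P_space[OF PP] vimage_def Int_def conj_commute)
  also have "\<dots> = measure (measure_pmf (listpmf (map (\<lambda>D. measure lborel D) (Z # atoms Ls)))) KY"
    by (simp add: law[OF PP disjD bbD])
  also have "map (\<lambda>D. measure lborel D) (Z # atoms Ls) = 1 # map (\<lambda>D. measure lborel D) (atoms Ls)"
    unfolding Z_def by simp
  finally have mY: "measure P Y = measure (measure_pmf (listpmf (1 # map (\<lambda>D. measure lborel D) (atoms Ls)))) KY" .
  have KYc: "0 # xs \<in> KY \<or> 1 # xs \<in> KY" for xs unfolding KY_def by auto
  have "exp (-1) \<le> measure P Y" unfolding mY by (rule pmf_lower) (use KYc in auto)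
  moreover have "1/3 \<le> exp (-1::real)"
  proof -
    have "exp (1::real) \<le> 3" by (rule exp_le)
    then have "1/3 \<le> 1 / exp (1::real)" by (simp add: field_simps)
    then show ?thesis by (simp add: exp_minus inverse_eq_divide)
  qed
  ultimately show False using Ylt by simp
qed

end

theorem lemma6:
  assumes "poisson_process P"
  shows "\<not> (\<exists>F. F \<in> lf_space \<rightarrow>\<^sub>M (lf_space \<Otimes>\<^sub>M lf_space) \<and>
              (AE A in P. proper_2colouring A (F A)) \<and>
              (\<forall>t. \<forall>A \<in> space lf_space.
                 F (translate t A) = (translate t (fst (F A)), translate t (snd (F A)))))"
proof
  assume "\<exists>F. F \<in> lf_space \<rightarrow>\<^sub>M (lf_space \<Otimes>\<^sub>M lf_space) \<and>
              (AE A in P. proper_2colouring A (F A)) \<and>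
              (\<forall>t. \<forall>A \<in> space lf_space.
                 F (translate t A) = (translate t (fst (F A)), translate t (snd (F A))))"
  then obtain F where F: "F \<in> lf_space \<rightarrow>\<^sub>M (lf_space \<Otimes>\<^sub>M lf_space)"
    "AE A in P. proper_2colouring A (F A)"
    "\<forall>t. \<forall>A \<in> space lf_space. F (translate t A) = (translate t (fst (F A)), translate t (snd (F A)))"
    by blast
  show False by (rule main_False[OF assms F])
qed

end
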